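(* The probability that the greedy random walk on $\mathbb{Z}^2$ with rule $\mathcal{R}_{\mathrm{RAND}}$, started at the origin, returns to the origin at least once equals the probability that the particle in the planar mirror model, started at the origin with a uniformly random initial direction, returns to the origin.
   Context: A greedy random walk (GRW) on a connected locally finite graph $G=(V,E)$ started at $v_0$: $X_0=v_0$; with $H_t=\{\{X_{s-1},X_s\}:0<s\le t\}$ and $J_t(v)=\{e\in E: v\in e, e\notin H_t\}$, if $J_t(X_t)\ne\emptyset$ then $X_{t+1}$ is chosen by the rule $\mathcal{R}_{\mathrm{RAND}}$: uniformly at random among the endpoints (other than $X_t$) of the edges in $J_t(X_t)$; if $J_t(X_t)=\emptyset$ then $X_{t+1}$ is a uniformly random neighbor of $X_t$. Planar mirror model: independently at each vertex of $\mathbb{Z}^2$, place a two-sided mirror along one of the two diagonal directions (each with probability $1/3$), or no mirror (probability $1/3$). A particle moves along the edges of $\mathbb{Z}^2$ one unit per step; at a vertex with no mirror it continues straight, and at a vertex with a mirror it is deflected by the law of reflection (turning left or right by $90^\circ$ according to the mirror's orientation). *)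

theory Defs
  imports "HOL-Probability.Probability"
begin

datatype dir = E | N | W | S

lemma UNIV_dir: "(UNIV :: dir set) = {E, N, W, S}"
  using dir.exhaust by blast

instance dir :: finite
  by standard (simp add: UNIV_dir)

fun dvec :: "dir \<Rightarrow> int \<times> int" where
  "dvec E = (1, 0)" | "dvec N = (0, 1)" | "dvec W = (-1, 0)" | "dvec S = (0, -1)"

definition mv :: "int \<times> int \<Rightarrow> dir \<Rightarrow> int \<times> int" where
  "mv p d = (fst p + fst (dvec d), snd p + snd (dvec d))"

(* Randomness of step t: a uniformly random ordering of the four directions.
   The first direction in this ordering that lies in a set C of candidates is
   uniformly distributed on C, independently across steps. *)
definition perm_pmf :: "dir list pmf" where
  "perm_pmf = pmf_of_set {xs. distinct xs \<and> set xs = (UNIV :: dir set)}"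

(* state: current vertex X_t and set H_t of traversed (undirected) edges *)
type_synonym grw_st = "(int \<times> int) \<times> (int \<times> int) set set"

definition grw_step :: "dir list \<Rightarrow> grw_st \<Rightarrow> grw_st" where
  "grw_step xs s =
     (let p = fst s; H = snd s;
          J = filter (\<lambda>d. {p, mv p d} \<notin> H) xs;
          d = (if J \<noteq> [] then hd J else hd xs)
      in (mv p d, insert {p, mv p d} H))"

primrec grw_state :: "(nat \<Rightarrow> dir list) \<Rightarrow> nat \<Rightarrow> grw_st" where
  "grw_state \<omega> 0 = ((0, 0), {})"
| "grw_state \<omega> (Suc t) = grw_step (\<omega> t) (grw_state \<omega> t)"

definition grw_space :: "(nat \<Rightarrow> dir list) measure" where
  "grw_space = PiM UNIV (\<lambda>_. measure_pmf perm_pmf)"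

datatype mirror = NoMirror | Slash | Backslash

lemma UNIV_mirror: "(UNIV :: mirror set) = {NoMirror, Slash, Backslash}"
  using mirror.exhaust by blast

instance mirror :: finite
  by standard (simp add: UNIV_mirror)

fun reflect :: "mirror \<Rightarrow> dir \<Rightarrow> dir" where
  "reflect NoMirror d = d"
| "reflect Slash E = N" | "reflect Slash N = E" | "reflect Slash W = S" | "reflect Slash S = W"
| "reflect Backslash E = S" | "reflect Backslash S = E"
| "reflect Backslash W = N" | "reflect Backslash N = W"

primrec mirror_state :: "(int \<times> int \<Rightarrow> mirror) \<Rightarrow> dir \<Rightarrow> nat \<Rightarrow> (int \<times> int) \<times> dir" where
  "mirror_state \<eta> d0 0 = ((0, 0), d0)"
| "mirror_state \<eta> d0 (Suc t) =
     (let p = fst (mirror_state \<eta> d0 t); d = snd (mirror_state \<eta> d0 t); q = mv p d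
      in (q, reflect (\<eta> q) d))"

definition mirror_space :: "((int \<times> int \<Rightarrow> mirror) \<times> dir) measure" where
  "mirror_space =
     PiM UNIV (\<lambda>_. measure_pmf (pmf_of_set (UNIV :: mirror set)))
     \<Otimes>\<^sub>M measure_pmf (pmf_of_set (UNIV :: dir set))"

end

theory Submission
  imports Defs
begin


definition cho :: "dir set \<Rightarrow> dir list \<Rightarrow> dir" where
  "cho G xs = (let J = filter (\<lambda>d. d \<in> G) xs in if J \<noteq> [] then hd J else hd xs)"

definition permL :: "dir list list" where
 "permL = [[E,N,W,S],[E,N,S,W],[E,W,N,S],[E,W,S,N],[E,S,N,W],[E,S,W,N],
           [N,E,W,S],[N,E,S,W],[N,W,E,S],[N,W,S,E],[N,S,E,W],[N,S,W,E],
           [W,E,N,S],[W,E,S,N],[W,N,E,S],[W,N,S,E],[W,S,E,N],[W,S,N,E],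
           [S,E,N,W],[S,E,W,N],[S,N,E,W],[S,N,W,E],[S,W,E,N],[S,W,N,E]]"

lemma dir_cases4: "(d::dir) = E \<or> d = N \<or> d = W \<or> d = S" by (cases d) auto

lemma perm_set: "{xs. distinct xs \<and> set xs = (UNIV :: dir set)} = set permL"
proof
  show "set permL \<subseteq> {xs. distinct xs \<and> set xs = UNIV}"
    by (auto simp: permL_def UNIV_dir)
next
  show "{xs. distinct xs \<and> set xs = UNIV} \<subseteq> set permL"
  proof
    fix xs :: "dir list" assume "xs \<in> {xs. distinct xs \<and> set xs = UNIV}"
    then have d: "distinct xs" and s: "set xs = UNIV" by auto
    have "length xs = card (UNIV::dir set)" using distinct_card[OF d] s by simp
    then have l: "length xs = 4" by (simp add: UNIV_dir)
    then obtain a b c e where xs: "xs = [a,b,c,e]"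
      by (cases xs; cases "tl xs"; cases "tl (tl xs)"; cases "tl (tl (tl xs))") auto
    show "xs \<in> set permL" using d s unfolding xs permL_def UNIV_dir
      using dir_cases4[of a] dir_cases4[of b] dir_cases4[of c] dir_cases4[of e]
      by (elim disjE) (simp_all add: insert_eq_iff)
  qed
qed

lemma G_expand: "(G::dir set) = (if E\<in>G then {E} else {}) \<union> (if N\<in>G then {N} else {}) \<union> (if W\<in>G then {W} else {}) \<union> (if S\<in>G then {S} else {})"
proof (rule set_eqI)
  fix x show "x \<in> G \<longleftrightarrow> x \<in> (if E\<in>G then {E} else {}) \<union> (if N\<in>G then {N} else {}) \<union> (if W\<in>G then {W} else {}) \<union> (if S\<in>G then {S} else {})"
    using dir_cases4[of x] by auto
qed

lemma prob_cho: "measure (measure_pmf perm_pmf) {xs. cho G xs = d} =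
   (if G = {} then 1/4 else if d \<in> G then 1 / real (card G) else 0)"
proof -
  have "measure (measure_pmf perm_pmf) {xs. cho G xs = d} = real (length (filter (\<lambda>xs. cho G xs = d) permL)) / 24"
  proof -
    have dl: "distinct permL" by (simp add: permL_def)
    have c24: "card (set permL) = 24" using distinct_card[OF dl] by (simp add: permL_def)
    have cf: "card (set permL \<inter> {xs. cho G xs = d}) = length (filter (\<lambda>xs. cho G xs = d) permL)"
      using distinct_length_filter[OF dl] by (simp add: Int_commute)
    show ?thesis unfolding perm_pmf_def perm_set
      apply (subst measure_pmf_of_set)
      using c24 cf by auto
  qed
  also have "\<dots> = (if G = {} then 1/4 else if d \<in> G then 1 / real (card G) else 0)"
    apply (subst (3 4 5) G_expand)
    using dir_cases4[of d]
    apply (cases "E \<in> G"; cases "N \<in> G"; cases "W \<in> G"; cases "S \<in> G")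
    apply (auto simp: permL_def cho_def)
    apply (metis dir_cases4)+
    done
  finally show ?thesis .
qed



fun opp :: "dir \<Rightarrow> dir" where
  "opp E = W" | "opp W = E" | "opp N = S" | "opp S = N"

definition partner :: "mirror \<Rightarrow> dir \<Rightarrow> dir" where
  "partner m d = reflect m (opp d)"

definition mir :: "dir \<Rightarrow> dir \<Rightarrow> mirror" where
  "mir a d = (if d = a then NoMirror else if reflect Slash a = d then Slash else Backslash)"

lemma opp_opp[simp]: "opp (opp d) = d" by (cases d) auto

lemma mv_inj: "mv p d = mv p e \<longleftrightarrow> d = e"
  by (cases d; cases e) (auto simp: mv_def prod_eq_iff)

lemma mv_neq: "mv p d \<noteq> p"
  by (cases d) (auto simp: mv_def prod_eq_iff)

lemma mv_opp[simp]: "mv (mv p d) (opp d) = p"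
  by (cases d) (auto simp: mv_def prod_eq_iff)

lemma edge_eq: "{v, mv v e} = {p, mv p d} \<longleftrightarrow> (v = p \<and> e = d) \<or> (v = mv p d \<and> e = opp d)"
proof
  assume h: "{v, mv v e} = {p, mv p d}"
  show "(v = p \<and> e = d) \<or> (v = mv p d \<and> e = opp d)"
  proof (cases "v = p")
    case True
    then show ?thesis using h mv_neq[of p e] mv_inj by (auto simp: doubleton_eq_iff)
  next
    case False
    then have "v = mv p d" "mv v e = p" using h by (auto simp: doubleton_eq_iff)
    then have "mv v e = mv v (opp d)" by simp
    then show ?thesis using \<open>v = mv p d\<close> mv_inj by blast
  qed
next
  assume "(v = p \<and> e = d) \<or> (v = mv p d \<and> e = opp d)"
  then show "{v, mv v e} = {p, mv p d}" by auto
qed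

lemma reflect_iff: "reflect m a = d \<longleftrightarrow> (d \<noteq> opp a \<and> m = mir a d)"
  by (cases m; cases a; cases d) (auto simp: mir_def)

lemma reflect_ne_opp: "reflect m a \<noteq> opp a"
  by (cases m; cases a) auto

lemma partner_invol[simp]: "partner m (partner m d) = d"
  by (cases m; cases d) (auto simp: partner_def)

lemma caseB: "b \<noteq> opp a \<Longrightarrow> partner m b \<noteq> opp a \<Longrightarrow>
   x \<notin> {opp a, b, partner m b} \<longleftrightarrow> x = reflect m a"
  by (cases m; cases a; cases b; cases x) (auto simp: partner_def)

lemma caseB_UNIV: "b \<noteq> opp a \<Longrightarrow> partner m b \<noteq> opp a \<Longrightarrow>
   insert (reflect m a) {opp a, b, partner m b} = UNIV"
  using caseB by blast

lemma card_compl_single: "card (- {x::dir}) = 3"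
proof -
  have "card (- {x}) = card (UNIV::dir set) - card {x}"
    by (simp add: Compl_eq_Diff_UNIV card_Diff_subset)
  then show ?thesis by (simp add: UNIV_dir)
qed

lemma card_mirror: "card (UNIV :: mirror set) = 3" by (simp add: UNIV_mirror)

lemma card_reflect_set: "card {m. reflect m a = d} = (if d = opp a then 0 else 1)"
  by (simp add: reflect_iff)

primrec pos :: "(nat \<Rightarrow> dir) \<Rightarrow> nat \<Rightarrow> int \<times> int" where
  "pos f 0 = (0,0)"
| "pos f (Suc i) = mv (pos f i) (f i)"

primrec hist :: "(nat \<Rightarrow> dir) \<Rightarrow> nat \<Rightarrow> (int \<times> int) set set" where
  "hist f 0 = {}"
| "hist f (Suc i) = insert {pos f i, pos f (Suc i)} (hist f i)"

definition used :: "(nat \<Rightarrow> dir) \<Rightarrow> nat \<Rightarrow> int \<times> int \<Rightarrow> dir set" where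
  "used f k v = {d. {v, mv v d} \<in> hist f k}"

definition pstep :: "(nat \<Rightarrow> dir) \<Rightarrow> nat \<Rightarrow> real" where
  "pstep f j = measure (measure_pmf perm_pmf) {xs. cho (- used f j (pos f j)) xs = f j}"

definition Gprod :: "(nat \<Rightarrow> dir) \<Rightarrow> nat \<Rightarrow> real" where
  "Gprod f n = (\<Prod>j<n. pstep f j)"

definition Cset :: "(nat \<Rightarrow> dir) \<Rightarrow> nat \<Rightarrow> int \<times> int \<Rightarrow> mirror set" where
  "Cset f n v = {m. \<forall>i. 1 \<le> i \<longrightarrow> i < n \<longrightarrow> pos f i = v \<longrightarrow> reflect m (f (i-1)) = f i}"

definition Vset :: "(nat \<Rightarrow> dir) \<Rightarrow> nat \<Rightarrow> (int \<times> int) set" where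
  "Vset f n = pos f ` {1..<n}"

definition Mprod :: "(nat \<Rightarrow> dir) \<Rightarrow> nat \<Rightarrow> real" where
  "Mprod f n = 1/4 * (\<Prod>v\<in>Vset f n. real (card (Cset f n v)) / 3)"

lemma used_0[simp]: "used f 0 v = {}" by (simp add: used_def)

lemma used_Suc: "used f (Suc k) v = used f k v \<union> (if v = pos f k then {f k} else {})
    \<union> (if v = pos f (Suc k) then {opp (f k)} else {})"
  by (auto simp: used_def edge_eq)

lemma Cset_Suc: "1 \<le> n \<Longrightarrow> Cset f (Suc n) v = Cset f n v \<inter>
   (if v = pos f n then {m. reflect m (f (n-1)) = f n} else UNIV)"
  by (auto simp: Cset_def less_Suc_eq)

lemma Cset_notin: "v \<notin> Vset f n \<Longrightarrow> Cset f n v = UNIV"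
  by (auto simp: Cset_def Vset_def)

lemma Vset_Suc: "1 \<le> n \<Longrightarrow> Vset f (Suc n) = insert (pos f n) (Vset f n)"
  by (auto simp: Vset_def less_Suc_eq)

lemma Mprod_step:
  assumes n: "1 \<le> n"
  shows "Mprod f (Suc n) * (real (card (Cset f n (pos f n))) / 3)
       = Mprod f n * (real (card (Cset f (Suc n) (pos f n))) / 3)"
proof -
  define p where "p = pos f n"
  define g where "g k v = real (card (Cset f k v)) / 3" for k v
  have fin: "finite (Vset f n)" by (simp add: Vset_def)
  have eqo: "\<And>v. v \<in> Vset f n - {p} \<Longrightarrow> g (Suc n) v = g n v"
    using n by (auto simp: g_def Cset_Suc p_def)
  have A: "(\<Prod>v\<in>Vset f (Suc n). g (Suc n) v) = g (Suc n) p * (\<Prod>v\<in>Vset f n - {p}. g n v)"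
    using n fin eqo by (simp add: Vset_Suc p_def[symmetric] prod.insert_remove)
  have B: "(\<Prod>v\<in>Vset f n. g n v) = g n p * (\<Prod>v\<in>Vset f n - {p}. g n v)"
  proof (cases "p \<in> Vset f n")
    case True
    then show ?thesis using fin by (simp add: prod.remove)
  next
    case False
    then have "g n p = 1" by (simp add: g_def Cset_notin card_mirror)
    then show ?thesis using False by simp
  qed
  show ?thesis
    unfolding Mprod_def g_def[symmetric] p_def[symmetric] A B by simp
qed



definition INV :: "(nat \<Rightarrow> dir) \<Rightarrow> nat \<Rightarrow> bool" where
  "INV f n = (let p = pos f n; a = f (n-1) in
     used f n (0,0) = {f 0} \<and>
     (\<forall>v. v \<noteq> (0,0) \<longrightarrow> v \<noteq> p \<longrightarrow> (used f n v = {} \<and> Cset f n v = UNIV) \<or>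
          (\<exists>m b. Cset f n v = {m} \<and> (used f n v = {b, partner m b} \<or> used f n v = UNIV))) \<and>
     ((used f n p = {opp a} \<and> Cset f n p = UNIV) \<or>
      (\<exists>m b. Cset f n p = {m} \<and> used f n p = {opp a, b, partner m b} \<and> b \<noteq> opp a \<and> partner m b \<noteq> opp a)))"

lemma Gprod_Suc: "Gprod f (Suc n) = Gprod f n * pstep f n"
  by (simp add: Gprod_def)

lemma Cset_mono: "1 \<le> n \<Longrightarrow> Cset f (Suc n) v \<subseteq> Cset f n v"
  by (simp add: Cset_Suc)

lemma Mprod_zero:
  assumes "1 \<le> n" "Mprod f n = 0" shows "Mprod f (Suc n) = 0"
proof -
  have fin: "finite (Vset f n)" by (simp add: Vset_def)
  from assms(2) obtain v where v: "v \<in> Vset f n" "card (Cset f n v) = 0"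
    using fin by (auto simp: Mprod_def)
  then have "Cset f n v = {}" by (simp add: card_eq_0_iff)
  then have "Cset f (Suc n) v = {}" using Cset_mono[OF assms(1)] by blast
  moreover have "v \<in> Vset f (Suc n)" using v assms(1) by (simp add: Vset_Suc)
  moreover have "finite (Vset f (Suc n))" by (simp add: Vset_def)
  ultimately show ?thesis by (auto simp: Mprod_def)
qed

lemma main_comb:
  assumes "1 \<le> n" "\<forall>i. 1 \<le> i \<longrightarrow> i < n \<longrightarrow> pos f i \<noteq> (0,0)"
  shows "Gprod f n = Mprod f n \<and> (Gprod f n \<noteq> 0 \<longrightarrow> pos f n \<noteq> (0,0) \<longrightarrow> INV f n)"
  using assms
proof (induction n rule: nat_induct_at_least)
  case base
  have u0: "\<And>v. used f (Suc 0) v = (if v = (0,0) then {f 0} else {}) \<union> (if v = mv (0,0) (f 0) then {opp (f 0)} else {})"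
    by (simp add: used_Suc)
  have G1: "Gprod f 1 = 1/4"
    using dir_cases4[of "f 0"] by (simp add: Gprod_def pstep_def prob_cho UNIV_dir)
  have M1: "Mprod f 1 = 1/4" by (simp add: Mprod_def Vset_def)
  have C1: "\<And>v. Cset f 1 v = UNIV" by (simp add: Cset_def)
  have "pos f 1 \<noteq> (0,0) \<longrightarrow> INV f 1"
  proof
    assume h: "pos f 1 \<noteq> (0,0)"
    have "mv (0,0) (f 0) \<noteq> (0,0)" using mv_neq by blast
    then have a: "used f (Suc 0) (0,0) = {f 0}" by (simp add: u0)
    have b: "used f (Suc 0) (mv (0,0) (f 0)) = {opp (f 0)}" using mv_neq[of "(0,0)" "f 0"] by (simp add: u0)
    have c: "\<And>v. v \<noteq> (0,0) \<Longrightarrow> v \<noteq> mv (0,0) (f 0) \<Longrightarrow> used f (Suc 0) v = {}" by (simp add: u0)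
    show "INV f 1" unfolding INV_def Let_def One_nat_def using a b c C1 by simp
  qed
  then show ?case using G1 M1 by simp
next
  case (Suc n)
  have hyp: "\<forall>i. 1 \<le> i \<longrightarrow> i < n \<longrightarrow> pos f i \<noteq> (0,0)" using Suc.prems by auto
  have pn: "pos f n \<noteq> (0,0)" using Suc.prems Suc.hyps by auto
  note IH = Suc.IH[OF hyp]
  define p where "p = pos f n"
  define a where "a = f (n-1)"
  define d where "d = f n"
  define q where "q = pos f (Suc n)"
  have q: "q = mv p d" by (simp add: q_def p_def d_def)
  have qp: "q \<noteq> p" using q mv_neq by simp
  have CS: "Cset f (Suc n) p = Cset f n p \<inter> {m. reflect m a = d}"
    using Suc.hyps by (simp add: Cset_Suc p_def a_def d_def)
  have CSo: "\<And>v. v \<noteq> p \<Longrightarrow> Cset f (Suc n) v = Cset f n v"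
    using Suc.hyps by (simp add: Cset_Suc p_def)
  have US: "\<And>v. used f (Suc n) v = used f n v \<union> (if v = p then {d} else {}) \<union> (if v = q then {opp d} else {})"
    by (simp add: used_Suc p_def q_def d_def)
  have MS: "Mprod f (Suc n) * (real (card (Cset f n p)) / 3) = Mprod f n * (real (card (Cset f (Suc n) p)) / 3)"
    using Mprod_step[OF Suc.hyps] by (simp add: p_def)
  have ps: "pstep f n = measure (measure_pmf perm_pmf) {xs. cho (- used f n p) xs = d}"
    by (simp add: pstep_def p_def d_def)
  show ?case
  proof (cases "Gprod f n = 0")
    case True
    then have "Mprod f n = 0" using IH by simp
    then have "Mprod f (Suc n) = 0" using Mprod_zero Suc.hyps by blast
    then show ?thesis using True by (simp add: Gprod_Suc)
  next
    case False
    have inv: "INV f n" using IH False pn by blast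
    have ii: "used f n (0,0) = {f 0} \<and>
     (\<forall>v. v \<noteq> (0,0) \<longrightarrow> v \<noteq> p \<longrightarrow> (used f n v = {} \<and> Cset f n v = UNIV) \<or>
          (\<exists>m b. Cset f n v = {m} \<and> (used f n v = {b, partner m b} \<or> used f n v = UNIV))) \<and>
     ((used f n p = {opp a} \<and> Cset f n p = UNIV) \<or>
      (\<exists>m b. Cset f n p = {m} \<and> used f n p = {opp a, b, partner m b} \<and> b \<noteq> opp a \<and> partner m b \<noteq> opp a))"
      using inv unfolding INV_def Let_def p_def a_def .
    have i1: "used f n (0,0) = {f 0}" using ii by (rule conjunct1)
    have i2': "\<forall>v. v \<noteq> (0,0) \<longrightarrow> v \<noteq> p \<longrightarrow> (used f n v = {} \<and> Cset f n v = UNIV) \<or>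
          (\<exists>m b. Cset f n v = {m} \<and> (used f n v = {b, partner m b} \<or> used f n v = UNIV))"
      using ii by (rule conjunct2[THEN conjunct1])
    have i2: "\<And>v. v \<noteq> (0,0) \<Longrightarrow> v \<noteq> p \<Longrightarrow> (used f n v = {} \<and> Cset f n v = UNIV) \<or>
          (\<exists>m b. Cset f n v = {m} \<and> (used f n v = {b, partner m b} \<or> used f n v = UNIV))"
      using i2' by blast
    have i3: "(used f n p = {opp a} \<and> Cset f n p = UNIV) \<or>
      (\<exists>m b. Cset f n p = {m} \<and> used f n p = {opp a, b, partner m b} \<and> b \<noteq> opp a \<and> partner m b \<noteq> opp a)"
      using ii by (rule conjunct2[THEN conjunct2])
    have newinv: "INV f (Suc n)" if pos: "pstep f n \<noteq> 0" and qn: "q \<noteq> (0,0)"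
      and pv: "d \<notin> used f n p"
      and ip: "(used f (Suc n) p = {b0, partner m0 b0} \<or> used f (Suc n) p = UNIV) \<and> Cset f (Suc n) p = {m0}"
      for b0 m0
    proof -
      have oq: "opp d \<notin> used f n q"
      proof
        assume "opp d \<in> used f n q"
        then have "{q, mv q (opp d)} \<in> hist f n" by (simp add: used_def)
        moreover have "{q, mv q (opp d)} = {p, mv p d}" using q by (simp add: insert_commute)
        ultimately show False using pv by (simp add: used_def)
      qed
      have a': "f (Suc n - 1) = d" by (simp add: d_def)
      have I1: "used f (Suc n) (0,0) = {f 0}" using i1 qn pn by (simp add: US p_def)
      have I2: "(used f (Suc n) v = {} \<and> Cset f (Suc n) v = UNIV) \<or>
          (\<exists>m b. Cset f (Suc n) v = {m} \<and> (used f (Suc n) v = {b, partner m b} \<or> used f (Suc n) v = UNIV))"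
        if "v \<noteq> (0,0)" "v \<noteq> q" for v
      proof (cases "v = p")
        case True
        then show ?thesis using ip by blast
      next
        case False
        then show ?thesis using i2[OF that(1) False] that False by (simp add: US CSo)
      qed
      have I3: "(used f (Suc n) q = {opp d} \<and> Cset f (Suc n) q = UNIV) \<or>
         (\<exists>m b. Cset f (Suc n) q = {m} \<and> used f (Suc n) q = {opp d, b, partner m b} \<and> b \<noteq> opp d \<and> partner m b \<noteq> opp d)"
      proof -
        have uq: "used f (Suc n) q = insert (opp d) (used f n q)" using qp by (auto simp: US)
        have cq: "Cset f (Suc n) q = Cset f n q" using qp CSo by simp
        from i2[OF qn qp] show ?thesis
        proof
          assume "used f n q = {} \<and> Cset f n q = UNIV"
          then show ?thesis using uq cq by simp
        next
          assume "\<exists>m b. Cset f n q = {m} \<and> (used f n q = {b, partner m b} \<or> used f n q = UNIV)"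
          then obtain m b where "Cset f n q = {m}" "used f n q = {b, partner m b} \<or> used f n q = UNIV" by blast
          then show ?thesis using oq uq cq by auto
        qed
      qed
      show ?thesis unfolding INV_def Let_def using I1 I2 I3 a' by (simp add: q_def)
    qed
    from i3 show ?thesis
    proof
      assume A: "used f n p = {opp a} \<and> Cset f n p = UNIV"
      have pst: "pstep f n = (if d = opp a then 0 else 1/3)"
      proof -
        have ne: "- {opp a} \<noteq> {}" by (cases a) auto
        show ?thesis using A ne by (simp add: ps prob_cho card_compl_single)
      qed
      have cs: "card (Cset f (Suc n) p) = (if d = opp a then 0 else 1)"
        using A by (simp add: CS card_reflect_set)
      have eq: "Gprod f (Suc n) = Mprod f (Suc n)"
        using MS A IH False cs by (cases "d = opp a") (auto simp: Gprod_Suc card_mirror pst)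
      have "INV f (Suc n)" if "Gprod f (Suc n) \<noteq> 0" "q \<noteq> (0,0)"
      proof -
        have dne: "d \<noteq> opp a" using that pst by (auto simp: Gprod_Suc)
        show ?thesis
        proof (rule newinv[of "opp a" "mir a d"])
          show "pstep f n \<noteq> 0" using dne pst by simp
          show "q \<noteq> (0,0)" by fact
          show "d \<notin> used f n p" using A dne by simp
          have "partner (mir a d) (opp a) = d" using dne reflect_iff by (simp add: partner_def)
          moreover have "used f (Suc n) p = {opp a, d}" using A qp by (auto simp: US)
          moreover have "Cset f (Suc n) p = {mir a d}" using A dne by (auto simp: CS reflect_iff)
          ultimately show "(used f (Suc n) p = {opp a, partner (mir a d) (opp a)} \<or> used f (Suc n) p = UNIV) \<and>
              Cset f (Suc n) p = {mir a d}" by simp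
        qed
      qed
      then show ?thesis using eq by (simp add: q_def)
    next
      assume "\<exists>m b. Cset f n p = {m} \<and> used f n p = {opp a, b, partner m b} \<and> b \<noteq> opp a \<and> partner m b \<noteq> opp a"
      then obtain m b where B: "Cset f n p = {m}" "used f n p = {opp a, b, partner m b}"
        "b \<noteq> opp a" "partner m b \<noteq> opp a" by blast
      have G: "- used f n p = {reflect m a}"
      proof (rule set_eqI)
        fix x show "x \<in> - used f n p \<longleftrightarrow> x \<in> {reflect m a}"
          using caseB[OF B(3,4), of x] B(2) by simp
      qed
      have pst: "pstep f n = (if d = reflect m a then 1 else 0)"
        using G by (simp add: ps prob_cho)
      have cs: "card (Cset f (Suc n) p) = (if d = reflect m a then 1 else 0)"
        using B by (auto simp: CS)
      have eq: "Gprod f (Suc n) = Mprod f (Suc n)"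
        using MS B IH False cs by (cases "d = reflect m a") (auto simp: Gprod_Suc pst)
      have "INV f (Suc n)" if "Gprod f (Suc n) \<noteq> 0" "q \<noteq> (0,0)"
      proof -
        have dne: "d = reflect m a" using that pst by (auto simp: Gprod_Suc split: if_splits)
        show ?thesis
        proof (rule newinv[of b m])
          show "pstep f n \<noteq> 0" using dne pst by simp
          show "q \<noteq> (0,0)" by fact
          show "d \<notin> used f n p" using G dne by auto
          have "used f (Suc n) p = UNIV" using B qp dne caseB_UNIV[OF B(3,4)] by (auto simp: US)
          moreover have "Cset f (Suc n) p = {m}" using B dne by (auto simp: CS)
          ultimately show "(used f (Suc n) p = {b, partner m b} \<or> used f (Suc n) p = UNIV) \<and>
              Cset f (Suc n) p = {m}" by simp
        qed
      qed
      then show ?thesis using eq by (simp add: q_def)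
    qed
  qed
qed



definition FR :: "nat \<Rightarrow> (nat \<Rightarrow> dir) set" where
  "FR n = {f \<in> PiE {..<n} (\<lambda>_. UNIV). 0 < n \<and> pos f n = (0,0) \<and> (\<forall>i. 1 \<le> i \<longrightarrow> i < n \<longrightarrow> pos f i \<noteq> (0,0))}"

lemma finite_FR: "finite (FR n)"
proof -
  have "finite (PiE {..<n} (\<lambda>_. UNIV :: dir set))" by (intro finite_PiE) auto
  then show ?thesis unfolding FR_def by auto
qed

lemma pos_repr:
  assumes P0: "Pos 0 = (0,0)" and Ps: "\<And>j. \<exists>d. Pos (Suc j) = mv (Pos j) d"
  shows "\<exists>f \<in> PiE {..<n} (\<lambda>_. UNIV). \<forall>j\<le>n. Pos j = pos f j"
proof -
  define g where "g j = (SOME d. Pos (Suc j) = mv (Pos j) d)" for j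
  have g: "Pos (Suc j) = mv (Pos j) (g j)" for j
    unfolding g_def using someI_ex[OF Ps[of j]] .
  define f where "f = restrict g {..<n}"
  have "j \<le> n \<Longrightarrow> Pos j = pos f j" for j
  proof (induction j)
    case 0 then show ?case using P0 by simp
  next
    case (Suc j)
    then have "j < n" by simp
    then show ?case using Suc g by (simp add: f_def)
  qed
  moreover have "f \<in> PiE {..<n} (\<lambda>_. UNIV)" by (simp add: f_def)
  ultimately show ?thesis by blast
qed

lemma pos_determines:
  assumes "\<forall>j\<le>n. pos f j = pos g j" "j < n" shows "f j = g j"
proof -
  have "mv (pos f j) (f j) = mv (pos g j) (g j)" using assms
    by (metis Suc_leI less_imp_le_nat pos.simps(2))
  moreover have "pos f j = pos g j" using assms by simp
  ultimately show ?thesis by (simp add: mv_inj)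
qed

lemma generic:
  assumes ps: "prob_space M"
    and P0: "\<And>\<omega>. Pos \<omega> 0 = (0,0)"
    and Ps: "\<And>\<omega> j. \<exists>d. Pos \<omega> (Suc j) = mv (Pos \<omega> j) d"
    and meas: "\<And>f n. {\<omega> \<in> space M. \<forall>j\<le>n. Pos \<omega> j = pos f j} \<in> sets M"
  shows "(\<lambda>n. \<Sum>f\<in>FR n. measure M {\<omega> \<in> space M. \<forall>j\<le>n. Pos \<omega> j = pos f j})
           sums measure M {\<omega> \<in> space M. \<exists>t>0. Pos \<omega> t = (0,0)}"
proof -
  interpret prob_space M by fact
  define Ev where "Ev f n = {\<omega> \<in> space M. \<forall>j\<le>n. Pos \<omega> j = pos f j}" for f n
  define F where "F n = {\<omega> \<in> space M. 0 < n \<and> Pos \<omega> n = (0,0) \<and> (\<forall>i. 1 \<le> i \<longrightarrow> i < n \<longrightarrow> Pos \<omega> i \<noteq> (0,0))}" for n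
  have FU: "F n = (\<Union>f\<in>FR n. Ev f n)" for n
  proof
    show "F n \<subseteq> (\<Union>f\<in>FR n. Ev f n)"
    proof
      fix \<omega> assume w: "\<omega> \<in> F n"
      obtain f where f: "f \<in> PiE {..<n} (\<lambda>_. UNIV)" "\<forall>j\<le>n. Pos \<omega> j = pos f j"
        using pos_repr[of "Pos \<omega>" n] P0 Ps by blast
      have "f \<in> FR n" using w f unfolding FR_def F_def by auto
      moreover have "\<omega> \<in> Ev f n" using w f unfolding Ev_def F_def by auto
      ultimately show "\<omega> \<in> (\<Union>f\<in>FR n. Ev f n)" by blast
    qed
  next
    show "(\<Union>f\<in>FR n. Ev f n) \<subseteq> F n"
      unfolding FR_def Ev_def F_def by auto
  qed
  have disj: "disjoint_family_on (\<lambda>f. Ev f n) (FR n)" for n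
    unfolding disjoint_family_on_def
  proof (intro ballI impI)
    fix f g assume fg: "f \<in> FR n" "g \<in> FR n" "f \<noteq> g"
    show "Ev f n \<inter> Ev g n = {}"
    proof (rule ccontr)
      assume "Ev f n \<inter> Ev g n \<noteq> {}"
      then obtain \<omega> where "\<omega> \<in> Ev f n" "\<omega> \<in> Ev g n" by blast
      then have eq: "\<forall>j\<le>n. pos f j = pos g j" unfolding Ev_def by auto
      have "f = g"
      proof
        fix j show "f j = g j"
        proof (cases "j < n")
          case True then show ?thesis using pos_determines[OF eq] by blast
        next
          case False then show ?thesis using fg(1,2) unfolding FR_def PiE_def extensional_def by auto
        qed
      qed
      then show False using fg by simp
    qed
  qed
  have Evm: "Ev f n \<in> sets M" for f n unfolding Ev_def by (rule meas)
  have Fm: "F n \<in> sets M" for n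
    unfolding FU by (rule sets.finite_UN[OF finite_FR Evm])
  have mF: "measure M (F n) = (\<Sum>f\<in>FR n. measure M (Ev f n))" for n
    unfolding FU by (rule finite_measure_finite_Union[OF finite_FR _ disj]) (use Evm in blast)
  have dF: "disjoint_family F"
    unfolding disjoint_family_on_def
  proof (intro ballI impI)
    fix m n :: nat assume mn: "m \<noteq> n"
    show "F m \<inter> F n = {}"
    proof (rule ccontr)
      assume "F m \<inter> F n \<noteq> {}"
      then obtain \<omega> where a: "\<omega> \<in> F m" and b: "\<omega> \<in> F n" by blast
      show False
      proof (cases "m < n")
        case True
        then show False using a b unfolding F_def by auto
      next
        case False
        then have "n < m" using mn by simp
        then show False using a b unfolding F_def by auto
      qed
    qed
  qed
  have UF: "(\<Union>n. F n) = {\<omega> \<in> space M. \<exists>t>0. Pos \<omega> t = (0,0)}"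
  proof
    show "(\<Union>n. F n) \<subseteq> {\<omega> \<in> space M. \<exists>t>0. Pos \<omega> t = (0,0)}" unfolding F_def by auto
  next
    show "{\<omega> \<in> space M. \<exists>t>0. Pos \<omega> t = (0,0)} \<subseteq> (\<Union>n. F n)"
    proof
      fix \<omega> assume w: "\<omega> \<in> {\<omega> \<in> space M. \<exists>t>0. Pos \<omega> t = (0,0)}"
      then obtain t where t: "0 < t \<and> Pos \<omega> t = (0,0)" "\<forall>s<t. \<not> (0 < s \<and> Pos \<omega> s = (0,0))"
        using exists_least_iff[of "\<lambda>t. 0 < t \<and> Pos \<omega> t = (0,0)"] by blast
      then have "\<omega> \<in> F t" using w unfolding F_def by auto
      then show "\<omega> \<in> (\<Union>n. F n)" by blast
    qed
  qed
  have "(\<lambda>n. measure M (F n)) sums measure M (\<Union>n. F n)"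
    by (rule finite_measure_UNION) (use Fm dF in auto)
  then show ?thesis unfolding UF mF Ev_def .
qed



definition Xg :: "(nat \<Rightarrow> dir) \<Rightarrow> nat \<Rightarrow> dir list set" where
  "Xg f j = {xs. cho (- used f j (pos f j)) xs = f j}"

lemma grw_step_eq: "grw_step xs (p,H) =
   (mv p (cho {d. {p, mv p d} \<notin> H} xs), insert {p, mv p (cho {d. {p, mv p d} \<notin> H} xs)} H)"
  by (simp add: grw_step_def cho_def Let_def)

lemma compl_used: "{d. {p, mv p d} \<notin> hist f n} = - used f n p"
  by (auto simp: used_def)

lemma grw_follow_aux:
  "((\<forall>j\<le>n. fst (grw_state \<omega> j) = pos f j) \<longleftrightarrow> (\<forall>j<n. \<omega> j \<in> Xg f j)) \<and>
   ((\<forall>j<n. \<omega> j \<in> Xg f j) \<longrightarrow> grw_state \<omega> n = (pos f n, hist f n))"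
proof (induction n)
  case 0 then show ?case by simp
next
  case (Suc n)
  show ?case
  proof (cases "\<forall>j<n. \<omega> j \<in> Xg f j")
    case False
    then have "\<not> (\<forall>j\<le>n. fst (grw_state \<omega> j) = pos f j)" using Suc.IH by blast
    then show ?thesis using False by (auto simp: less_Suc_eq le_Suc_eq)
  next
    case True
    then have st: "grw_state \<omega> n = (pos f n, hist f n)" "\<forall>j\<le>n. fst (grw_state \<omega> j) = pos f j"
      using Suc.IH by blast+
    define c where "c = cho (- used f n (pos f n)) (\<omega> n)"
    have s1: "grw_state \<omega> (Suc n) = (mv (pos f n) c, insert {pos f n, mv (pos f n) c} (hist f n))"
      by (simp add: st grw_step_eq compl_used c_def)
    have A: "(\<forall>j\<le>Suc n. fst (grw_state \<omega> j) = pos f j) \<longleftrightarrow> c = f n"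
      using st s1 by (auto simp: le_Suc_eq mv_inj)
    have B: "(\<forall>j<Suc n. \<omega> j \<in> Xg f j) \<longleftrightarrow> c = f n"
      using True by (auto simp: less_Suc_eq Xg_def c_def)
    show ?thesis using A B s1 by simp
  qed
qed

lemma ppsG: "product_prob_space (\<lambda>_::nat. measure_pmf perm_pmf)"
  by (simp add: product_prob_space_def product_sigma_finite_def product_prob_space_axioms_def
      prob_space_measure_pmf prob_space_imp_sigma_finite)

lemma ppsM: "product_prob_space (\<lambda>_::int\<times>int. measure_pmf (pmf_of_set (UNIV::mirror set)))"
  by (simp add: product_prob_space_def product_sigma_finite_def product_prob_space_axioms_def
      prob_space_measure_pmf prob_space_imp_sigma_finite)

lemma collect_emb:
  "{x\<in>space (Pi\<^sub>M I M). \<forall>i\<in>J. x i \<in> X i} = prod_emb I M J (Pi\<^sub>E J X)"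
  if "J \<subseteq> I" "\<And>i. i \<in> J \<Longrightarrow> X i \<subseteq> space (M i)"
  unfolding prod_emb_def using that by (auto simp: space_PiM Pi_iff)

lemma grw_Ev:
  "{\<omega> \<in> space grw_space. \<forall>j\<le>n. fst (grw_state \<omega> j) = pos f j} \<in> sets grw_space \<and>
   measure grw_space {\<omega> \<in> space grw_space. \<forall>j\<le>n. fst (grw_state \<omega> j) = pos f j} = Gprod f n"
proof -
  interpret product_prob_space "\<lambda>_::nat. measure_pmf perm_pmf" UNIV by (rule ppsG)
  have eq: "{\<omega> \<in> space grw_space. \<forall>j\<le>n. fst (grw_state \<omega> j) = pos f j}
      = prod_emb UNIV (\<lambda>_. measure_pmf perm_pmf) {..<n} (Pi\<^sub>E {..<n} (Xg f))"
    unfolding grw_space_def using grw_follow_aux[of n \<omega> f for \<omega>]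
    by (subst collect_emb[symmetric]) auto
  show ?thesis unfolding eq
  proof
    show "prod_emb UNIV (\<lambda>_. measure_pmf perm_pmf) {..<n} (Pi\<^sub>E {..<n} (Xg f)) \<in> sets grw_space"
      unfolding grw_space_def by (rule sets_PiM_I) auto
    show "measure grw_space (prod_emb UNIV (\<lambda>_. measure_pmf perm_pmf) {..<n} (Pi\<^sub>E {..<n} (Xg f))) = Gprod f n"
      unfolding grw_space_def by (subst measure_PiM_emb) (auto simp: Gprod_def pstep_def Xg_def)
  qed
qed

lemma ms_aux:
  "((\<forall>i\<le>Suc j. fst (mirror_state \<eta> d0 i) = pos f i) \<longleftrightarrow>
      (d0 = f 0 \<and> (\<forall>i. 1 \<le> i \<longrightarrow> i < Suc j \<longrightarrow> reflect (\<eta> (pos f i)) (f (i-1)) = f i))) \<and>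
   ((d0 = f 0 \<and> (\<forall>i. 1 \<le> i \<longrightarrow> i < Suc j \<longrightarrow> reflect (\<eta> (pos f i)) (f (i-1)) = f i))
      \<longrightarrow> mirror_state \<eta> d0 j = (pos f j, f j))"
proof (induction j)
  case 0
  have "(\<forall>i\<le>Suc 0. fst (mirror_state \<eta> d0 i) = pos f i) \<longleftrightarrow> mv (0,0) d0 = mv (0,0) (f 0)"
    by (auto simp: le_Suc_eq Let_def)
  then show ?case by (auto simp: mv_inj)
next
  case (Suc j)
  let ?R = "\<lambda>k. d0 = f 0 \<and> (\<forall>i. 1 \<le> i \<longrightarrow> i < k \<longrightarrow> reflect (\<eta> (pos f i)) (f (i-1)) = f i)"
  let ?P = "\<lambda>k. \<forall>i\<le>k. fst (mirror_state \<eta> d0 i) = pos f i"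
  show ?case
  proof (cases "?R (Suc j)")
    case False
    then have "\<not> ?P (Suc j)" using Suc.IH by blast
    moreover have "\<not> ?R (Suc (Suc j))" using False by auto
    ultimately show ?thesis by (auto simp: le_Suc_eq)
  next
    case True
    then have st: "mirror_state \<eta> d0 j = (pos f j, f j)" "?P (Suc j)" using Suc.IH by blast+
    have s1: "mirror_state \<eta> d0 (Suc j) = (pos f (Suc j), reflect (\<eta> (pos f (Suc j))) (f j))"
      by (simp add: st Let_def)
    have s2: "fst (mirror_state \<eta> d0 (Suc (Suc j))) = mv (pos f (Suc j)) (reflect (\<eta> (pos f (Suc j))) (f j))"
      by (subst mirror_state.simps(2)) (simp add: s1 Let_def del: mirror_state.simps)
    have A: "?P (Suc (Suc j)) \<longleftrightarrow> reflect (\<eta> (pos f (Suc j))) (f j) = f (Suc j)"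
      using st(2) s2 by (auto simp: le_Suc_eq mv_inj simp del: mirror_state.simps)
    have B: "?R (Suc (Suc j)) \<longleftrightarrow> reflect (\<eta> (pos f (Suc j))) (f j) = f (Suc j)"
      using True by (auto simp: less_Suc_eq)
    show ?thesis using A B s1 by simp
  qed
qed

lemma mirror_follow:
  assumes "1 \<le> n"
  shows "(\<forall>j\<le>n. fst (mirror_state \<eta> d0 j) = pos f j) \<longleftrightarrow>
         (d0 = f 0 \<and> (\<forall>v\<in>Vset f n. \<eta> v \<in> Cset f n v))"
proof -
  obtain j where n: "n = Suc j" using assms by (cases n) auto
  have "(\<forall>v\<in>Vset f n. \<eta> v \<in> Cset f n v) \<longleftrightarrow>
        (\<forall>i. 1 \<le> i \<longrightarrow> i < n \<longrightarrow> reflect (\<eta> (pos f i)) (f (i-1)) = f i)"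
    unfolding Vset_def Cset_def by auto
  then show ?thesis using ms_aux[of j \<eta> d0 f] n by simp
qed

lemma mirror_Ev:
  assumes n: "1 \<le> n"
  shows "{x \<in> space mirror_space. \<forall>j\<le>n. fst (mirror_state (fst x) (snd x) j) = pos f j} \<in> sets mirror_space \<and>
   measure mirror_space {x \<in> space mirror_space. \<forall>j\<le>n. fst (mirror_state (fst x) (snd x) j) = pos f j} = Mprod f n"
proof -
  interpret product_prob_space "\<lambda>_::int\<times>int. measure_pmf (pmf_of_set (UNIV::mirror set))" UNIV by (rule ppsM)
  let ?PM = "PiM (UNIV::(int\<times>int) set) (\<lambda>_. measure_pmf (pmf_of_set (UNIV :: mirror set)))"
  let ?D = "measure_pmf (pmf_of_set (UNIV :: dir set))"
  let ?A = "prod_emb UNIV (\<lambda>_. measure_pmf (pmf_of_set (UNIV :: mirror set))) (Vset f n) (Pi\<^sub>E (Vset f n) (Cset f n))"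
  have finV: "finite (Vset f n)" by (simp add: Vset_def)
  have Aeq: "?A = {\<eta> \<in> space ?PM. \<forall>v\<in>Vset f n. \<eta> v \<in> Cset f n v}"
    by (subst collect_emb) auto
  have eq: "{x \<in> space mirror_space. \<forall>j\<le>n. fst (mirror_state (fst x) (snd x) j) = pos f j} = ?A \<times> {f 0}"
    unfolding Aeq mirror_space_def space_pair_measure using mirror_follow[OF n] by auto
  have Am: "?A \<in> sets ?PM" by (rule sets_PiM_I) (auto simp: finV)
  have mA: "measure ?PM ?A = (\<Prod>v\<in>Vset f n. real (card (Cset f n v)) / 3)"
    by (subst measure_PiM_emb) (auto simp: finV measure_pmf_of_set card_mirror)
  have "emeasure mirror_space (?A \<times> {f 0}) = emeasure ?PM ?A * emeasure ?D {f 0}"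
    unfolding mirror_space_def by (rule measure_pmf.emeasure_pair_measure_Times) (auto simp: Am)
  then have "measure mirror_space (?A \<times> {f 0}) = measure ?PM ?A * measure ?D {f 0}"
    by (simp add: measure_def enn2real_mult)
  also have "\<dots> = Mprod f n"
  proof -
    have cU: "card (UNIV::dir set) = 4" by (simp add: UNIV_dir)
    have "measure ?D {f 0} = 1/4" by (simp add: measure_pmf_of_set cU)
    then show ?thesis by (simp add: mA Mprod_def)
  qed
  finally have "measure mirror_space (?A \<times> {f 0}) = Mprod f n" .
  moreover have "?A \<times> {f 0} \<in> sets mirror_space"
    unfolding mirror_space_def using Am by (intro pair_measureI) auto
  ultimately show ?thesis unfolding eq by simp
qed



lemma fst_grw_step: "fst (grw_step xs s) = mv (fst s) (cho {d. {fst s, mv (fst s) d} \<notin> snd s} xs)"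
  by (cases s) (simp add: grw_step_eq)

theorem mainTheorem14:
  shows "measure grw_space
           {\<omega> \<in> space grw_space. \<exists>t>0. fst (grw_state \<omega> t) = (0, 0)}
       = measure mirror_space
           {x \<in> space mirror_space. \<exists>t>0. fst (mirror_state (fst x) (snd x) t) = (0, 0)}"
proof -
  have psG: "prob_space grw_space"
    unfolding grw_space_def by (rule prob_space_PiM) (simp add: prob_space_measure_pmf)
  have psM: "prob_space mirror_space"
  proof -
    have p1: "prob_space (PiM (UNIV::(int\<times>int) set) (\<lambda>_. measure_pmf (pmf_of_set (UNIV :: mirror set))))"
      by (rule prob_space_PiM) (simp add: prob_space_measure_pmf)
    interpret pp: pair_prob_space "PiM (UNIV::(int\<times>int) set) (\<lambda>_. measure_pmf (pmf_of_set (UNIV :: mirror set)))"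
       "measure_pmf (pmf_of_set (UNIV :: dir set))"
      by (simp add: pair_prob_space_def pair_sigma_finite_def prob_space_measure_pmf
           prob_space_imp_sigma_finite p1)
    show ?thesis unfolding mirror_space_def by (rule pp.P.prob_space_axioms)
  qed
  have sG: "(\<lambda>n. \<Sum>f\<in>FR n. measure grw_space {\<omega> \<in> space grw_space. \<forall>j\<le>n. fst (grw_state \<omega> j) = pos f j})
      sums measure grw_space {\<omega> \<in> space grw_space. \<exists>t>0. fst (grw_state \<omega> t) = (0, 0)}"
  proof (rule generic[OF psG, where Pos = "\<lambda>\<omega> t. fst (grw_state \<omega> t)"])
    show "\<And>\<omega>. fst (grw_state \<omega> 0) = (0,0)" by simp
    show "\<exists>d. fst (grw_state \<omega> (Suc j)) = mv (fst (grw_state \<omega> j)) d" for \<omega> j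
      unfolding grw_state.simps fst_grw_step by (rule exI) (rule refl)
    show "{\<omega> \<in> space grw_space. \<forall>j\<le>n. fst (grw_state \<omega> j) = pos f j} \<in> sets grw_space" for f n
      by (rule conjunct1[OF grw_Ev])
  qed
  have sM: "(\<lambda>n. \<Sum>f\<in>FR n. measure mirror_space {x \<in> space mirror_space. \<forall>j\<le>n. fst (mirror_state (fst x) (snd x) j) = pos f j})
      sums measure mirror_space {x \<in> space mirror_space. \<exists>t>0. fst (mirror_state (fst x) (snd x) t) = (0, 0)}"
  proof (rule generic[OF psM, where Pos = "\<lambda>x t. fst (mirror_state (fst x) (snd x) t)"])
    show "\<And>x. fst (mirror_state (fst x) (snd x) 0) = (0,0)" by simp
    show "\<exists>d. fst (mirror_state (fst x) (snd x) (Suc j)) = mv (fst (mirror_state (fst x) (snd x) j)) d" for x j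
      by (rule exI[of _ "snd (mirror_state (fst x) (snd x) j)"]) (simp add: Let_def)
    show "{x \<in> space mirror_space. \<forall>j\<le>n. fst (mirror_state (fst x) (snd x) j) = pos f j} \<in> sets mirror_space" for f n
    proof (cases "n = 0")
      case True
      then have "{x \<in> space mirror_space. \<forall>j\<le>n. fst (mirror_state (fst x) (snd x) j) = pos f j} = space mirror_space"
        by (auto simp del: mirror_state.simps simp add: mirror_state.simps(1))
      then show ?thesis by (simp only: sets.top)
    next
      case False
      then have "1 \<le> n" by simp
      then show ?thesis by (rule conjunct1[OF mirror_Ev])
    qed
  qed
  have eqterm: "(\<Sum>f\<in>FR n. measure grw_space {\<omega> \<in> space grw_space. \<forall>j\<le>n. fst (grw_state \<omega> j) = pos f j})
     = (\<Sum>f\<in>FR n. measure mirror_space {x \<in> space mirror_space. \<forall>j\<le>n. fst (mirror_state (fst x) (snd x) j) = pos f j})" for n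
  proof (rule sum.cong[OF refl])
    fix f assume f: "f \<in> FR n"
    then have n: "1 \<le> n" and nz: "\<forall>i. 1 \<le> i \<longrightarrow> i < n \<longrightarrow> pos f i \<noteq> (0,0)"
      unfolding FR_def by auto
    show "measure grw_space {\<omega> \<in> space grw_space. \<forall>j\<le>n. fst (grw_state \<omega> j) = pos f j}
       = measure mirror_space {x \<in> space mirror_space. \<forall>j\<le>n. fst (mirror_state (fst x) (snd x) j) = pos f j}"
    proof -
      have a: "measure grw_space {\<omega> \<in> space grw_space. \<forall>j\<le>n. fst (grw_state \<omega> j) = pos f j} = Gprod f n"
        using grw_Ev[of n f] by (rule conjunct2)
      have b: "measure mirror_space {x \<in> space mirror_space. \<forall>j\<le>n. fst (mirror_state (fst x) (snd x) j) = pos f j} = Mprod f n"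
        using mirror_Ev[OF n, of f] by (rule conjunct2)
      have c: "Gprod f n = Mprod f n" using main_comb[OF n nz] by (rule conjunct1)
      show ?thesis unfolding a b c ..
    qed
  qed
  have sG': "(\<lambda>n. \<Sum>f\<in>FR n. measure mirror_space {x \<in> space mirror_space. \<forall>j\<le>n. fst (mirror_state (fst x) (snd x) j) = pos f j})
      sums measure grw_space {\<omega> \<in> space grw_space. \<exists>t>0. fst (grw_state \<omega> t) = (0, 0)}"
    using sG unfolding eqterm .
  show ?thesis by (rule sums_unique2[OF sG' sM])
qed


end
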